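(* Let $p,q\ge2$, $\mu\in\mathbb{C}\setminus\{0\}$ and $P(u,v;\mu)=\mu(u^p+\bar u)+v^q+\bar v$, regarded as a map $\mathbb{R}^4\to\mathbb{R}^2$. If $z_0=(u_0,v_0)$ is a singular point of $P$ (a point where its real differential has rank $<2$), then $p|u_0|^{p-1}=q|v_0|^{q-1}=1$ (in particular $u_0v_0\neq0$) and, for any choice of real representatives of $\arg u_0,\arg v_0,\arg\mu$, there is an integer $\kappa$ with $\frac{p-1}{2}\arg u_0+\arg\mu=\frac{q-1}{2}\arg v_0+\kappa\pi$. *)

theory Defs
  imports "HOL-Analysis.Analysis"
begin

definition Pmap :: "nat \<Rightarrow> nat \<Rightarrow> complex \<Rightarrow> complex \<times> complex \<Rightarrow> complex" where
  "Pmap p q \<mu> z = \<mu> * ((fst z) ^ p + cnj (fst z)) + (snd z) ^ q + cnj (snd z)"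

definition singular_point :: "('a::real_normed_vector \<Rightarrow> 'b::real_normed_vector) \<Rightarrow> 'a \<Rightarrow> bool" where
  "singular_point f z \<longleftrightarrow> (\<exists>D. (f has_derivative D) (at z) \<and> dim (range D) < 2)"

end

theory Submission imports Defs begin
lemma cnj_cis: "cnj (cis x) = cis (-x)" by (simp add: complex_eq_iff)
lemma modlem: "Im (cnj (A + B) * (A*\<i> - B*\<i>)) = (cmod A)^2 - (cmod B)^2"
  unfolding cmod_power2 by (simp add: algebra_simps power2_eq_square)
lemma vec1:
  assumes "u0 = complex_of_real r * cis a" "real p * r ^ (p - 1) = 1" "p \<ge> 1"
  shows "\<mu> * (of_nat p * u0^(p-1) * cis (-((real p - 1)/2*a)) + cnj (cis (-((real p - 1)/2*a))))
      = 2 * \<mu> * cis ((real p - 1)/2*a)"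
proof -
  have "of_nat p * u0^(p-1) = complex_of_real (real p * r^(p-1)) * cis (real (p-1) * a)"
    using Complex.DeMoivre[of a "p-1"] unfolding assms(1) power_mult_distrib by (simp del: of_nat_diff)
  also have "real (p-1) = real p - 1" using assms by simp
  finally have "of_nat p * u0^(p-1) = complex_of_real (real p * r^(p-1)) * cis ((real p - 1) * a)" .
  then have e: "of_nat p * u0^(p-1) = cis ((real p - 1) * a)" unfolding assms(2) by simp
  have "cis ((real p - 1) * a) * cis (-((real p - 1)/2*a)) = cis ((real p - 1)/2*a)"
    unfolding cis_mult by (simp add: field_simps)
  then show ?thesis unfolding e cnj_cis by simp
qed

lemma ang:
  assumes "Im (cnj (complex_of_real X * cis t1) * (complex_of_real Y * cis t2)) = 0" "X * Y > 0"
  shows "\<exists>k::int. t1 = t2 + real_of_int k * pi"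
proof -
  have "cnj (complex_of_real X * cis t1) * (complex_of_real Y * cis t2) = complex_of_real (X*Y) * cis (t2 - t1)"
    by (simp add: cnj_cis cis_mult)
  then have "Im (cnj (complex_of_real X * cis t1) * (complex_of_real Y * cis t2)) = X*Y * sin (t2 - t1)"
    by (simp add: sin_diff algebra_simps)
  with assms(1) have "X*Y * sin (t2 - t1) = 0" by linarith
  with assms(2) have "sin (t2 - t1) = 0" by auto
  then have "sin (t1 - t2) = 0" by (metis minus_diff_eq sin_minus neg_equal_0_iff_equal)
  then obtain i::int where "t1 - t2 = i * pi" by (auto simp: sin_zero_iff_int2)
  then show ?thesis by (intro exI[of _ i]) simp
qed

lemma cramer:
  fixes x y z :: complex
  assumes "Im (cnj x * y) \<noteq> 0"
  shows "z = (Im (cnj z * y) / Im (cnj x * y)) *\<^sub>R x + (Im (cnj x * z) / Im (cnj x * y)) *\<^sub>R y"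
proof -
  define d where "d = Im (cnj x * y)"
  have "d *\<^sub>R z = Im (cnj z * y) *\<^sub>R x + Im (cnj x * z) *\<^sub>R y"
    unfolding d_def complex_eq_iff by (simp add: algebra_simps)
  then have "(1/d) *\<^sub>R (d *\<^sub>R z) = (1/d) *\<^sub>R (Im (cnj z * y) *\<^sub>R x + Im (cnj x * z) *\<^sub>R y)"
    by simp
  then show ?thesis using assms unfolding d_def[symmetric] by (simp add: scaleR_add_right)
qed

lemma rank_lemma:
  fixes D :: "complex \<times> complex \<Rightarrow> complex"
  assumes "linear D" "dim (range D) < 2"
  shows "Im (cnj (D a) * D b) = 0"
proof (rule ccontr)
  assume h: "Im (cnj (D a) * D b) \<noteq> 0"
  have "\<forall>z. z \<in> range D"
  proof
    fix z :: complex
    let ?s = "Im (cnj z * D b) / Im (cnj (D a) * D b)"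
    let ?t = "Im (cnj (D a) * z) / Im (cnj (D a) * D b)"
    have "z = ?s *\<^sub>R D a + ?t *\<^sub>R D b" by (rule cramer[OF h])
    also have "\<dots> = D (?s *\<^sub>R a + ?t *\<^sub>R b)"
      using assms(1) by (simp add: linear_add linear_scale)
    finally show "z \<in> range D" by blast
  qed
  then have "range D = UNIV" by auto
  then have "dim (range D) = 2" by (simp add: dim_UNIV)
  with assms(2) show False by simp
qed

lemma derivP: "((Pmap p q \<mu>) has_derivative (\<lambda>(h,k). \<mu>*(of_nat p * u0^(p-1)*h + cnj h) + of_nat q * v0^(q-1)*k + cnj k)) (at (u0,v0))"
  unfolding Pmap_def
  apply (rule derivative_eq_intros refl | simp)+
  apply (auto simp: fun_eq_iff algebra_simps)
  done

theorem lemma3p2: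
  fixes p q :: nat and \<mu> u0 v0 :: complex
  assumes "p \<ge> 2" and "q \<ge> 2" and "\<mu> \<noteq> 0"
    and "singular_point (Pmap p q \<mu>) (u0, v0)"
  shows "real p * cmod u0 ^ (p - 1) = 1 \<and> real q * cmod v0 ^ (q - 1) = 1
    \<and> u0 \<noteq> 0 \<and> v0 \<noteq> 0
    \<and> (\<forall>a b c :: real. u0 = complex_of_real (cmod u0) * cis a
          \<and> v0 = complex_of_real (cmod v0) * cis b
          \<and> \<mu> = complex_of_real (cmod \<mu>) * cis c
        \<longrightarrow> (\<exists>\<kappa>::int. (real p - 1) / 2 * a + c = (real q - 1) / 2 * b + real_of_int \<kappa> * pi))"
proof -
  obtain D where hD: "(Pmap p q \<mu> has_derivative D) (at (u0,v0))" "dim (range D) < 2"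
    using assms(4) unfolding singular_point_def by blast
  define DE where "DE = (\<lambda>(h,k). \<mu>*(of_nat p * u0^(p-1)*h + cnj h) + of_nat q * v0^(q-1)*k + cnj k)"
  have DDE: "D = DE" unfolding DE_def by (rule has_derivative_unique[OF hD(1) derivP])
  have lin: "linear D" using hD(1) has_derivative_linear by blast
  have R: "Im (cnj (DE x) * DE y) = 0" for x y
    using rank_lemma[OF lin hD(2)] DDE by simp
  define A where "A = \<mu> * of_nat p * u0^(p-1)"
  define C where "C = of_nat q * v0^(q-1)"
  have "DE (1,0) = A + \<mu>" "DE (\<i>,0) = A*\<i> - \<mu>*\<i>"
    unfolding DE_def A_def by (simp_all add: algebra_simps)
  with R[of "(1,0)" "(\<i>,0)"] have "(cmod A)^2 - (cmod \<mu>)^2 = 0" by (simp only: modlem)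
  then have "cmod A = cmod \<mu>" by (simp add: power2_eq_iff_nonneg)
  then have "cmod \<mu> * (real p * cmod u0 ^ (p-1)) = cmod \<mu> * 1"
    unfolding A_def by (simp add: norm_mult norm_power)
  then have P1: "real p * cmod u0 ^ (p - 1) = 1" using assms(3) by simp
  have "DE (0,1) = C + 1" "DE (0,\<i>) = C*\<i> - 1*\<i>"
    unfolding DE_def C_def by (simp_all add: algebra_simps)
  with R[of "(0,1)" "(0,\<i>)"] have "(cmod C)^2 - (cmod 1)^2 = 0" by (simp only: modlem)
  then have "cmod C = 1" using power2_eq_iff_nonneg[of "cmod C" 1] by simp
  then have Q1: "real q * cmod v0 ^ (q - 1) = 1"
    unfolding C_def by (simp add: norm_mult norm_power)
  have u0: "u0 \<noteq> 0" using P1 assms(1) by (cases "u0 = 0") (auto simp: power_0_left)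
  have v0: "v0 \<noteq> 0" using Q1 assms(2) by (cases "v0 = 0") (auto simp: power_0_left)
  have ANG: "\<exists>\<kappa>::int. (real p - 1) / 2 * a + c = (real q - 1) / 2 * b + real_of_int \<kappa> * pi"
    if ha: "u0 = complex_of_real (cmod u0) * cis a" and hb: "v0 = complex_of_real (cmod v0) * cis b"
      and hc: "\<mu> = complex_of_real (cmod \<mu>) * cis c" for a b c
  proof -
    define h where "h = cis (-((real p - 1)/2*a))"
    define k where "k = cis (-((real q - 1)/2*b))"
    have "DE (h,0) = \<mu> * (of_nat p * u0^(p-1) * h + cnj h)" unfolding DE_def by simp
    also have "\<dots> = 2 * \<mu> * cis ((real p - 1)/2*a)"
      unfolding h_def by (rule vec1[OF ha P1]) (use assms(1) in simp)
    also have "\<dots> = complex_of_real (2 * cmod \<mu>) * cis (c + (real p - 1)/2*a)"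
      by (subst hc) (simp add: cis_mult)
    finally have e1: "DE (h,0) = complex_of_real (2 * cmod \<mu>) * cis (c + (real p - 1)/2*a)" .
    have "DE (0,k) = 1 * (of_nat q * v0^(q-1) * k + cnj k)" unfolding DE_def by simp
    also have "\<dots> = 2 * 1 * cis ((real q - 1)/2*b)"
      unfolding k_def by (rule vec1[OF hb Q1]) (use assms(2) in simp)
    finally have e2: "DE (0,k) = complex_of_real 2 * cis ((real q - 1)/2*b)" by simp
    have "\<exists>k::int. c + (real p - 1)/2*a = (real q - 1)/2*b + real_of_int k * pi"
      by (rule ang[where X="2 * cmod \<mu>" and Y=2]) (use R[of "(h,0)" "(0,k)"] e1 e2 assms(3) in auto)
    then show ?thesis by (simp add: algebra_simps)
  qed
  show ?thesis using P1 Q1 u0 v0 ANG by blast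
qed
end
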